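(* Let $G=(V,E)$ be a connected chordal graph on at least three vertices and let $E'$ be a minimum-size $(3,1)$-completion set of $G$. Let $T_i$ and $T_j$ be two distinct trees of $G$ with $|V(T_i)|\ge3$, $|V(T_j)|\ge3$ and $|E'_{i,j}|>0$. Then there is a minimum-size $(3,1)$-completion set $E''$ of $G$ with $|E''_{i,j}|=0$ obtained from $E'$ by replacing the edges of $E'_{i,j}$ with non-edges of $G$ having both endpoints in $V(T_i)$ or both endpoints in $V(T_j)$.
   Context: A graph is chordal if it has no induced cycle of length at least four. A bridge of $G$ is an edge whose removal disconnects $G$. The trees of $G$, denoted $T_1,\dots,T_c$, are the maximal connected subgraphs formed by bridges of $G$ (the non-trivial connected components of the subgraph $(V,\{\text{bridges of }G\})$). A connected graph has a $(3,1)$-cover if each edge lies in a triangle; a set $E'$ of non-edges of $G$ is a $(3,1)$-completion set if $G\cup E'$ has a $(3,1)$-cover. For a completion set $E'$ and $i\neq j$, $E'_{i,j}=\{(u,v)\in E': u\in V(T_i), v\in V(T_j)\}$. *)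

theory Defs
  imports Main
begin

definition graph :: "'a set \<Rightarrow> 'a set set \<Rightarrow> bool" where
  "graph V E \<longleftrightarrow> finite V \<and> (\<forall>e\<in>E. \<exists>u v. u \<noteq> v \<and> u \<in> V \<and> v \<in> V \<and> e = {u, v})"

definition reachable :: "'a set set \<Rightarrow> 'a \<Rightarrow> 'a \<Rightarrow> bool" where
  "reachable E u v \<longleftrightarrow> (\<lambda>x y. {x, y} \<in> E)\<^sup>*\<^sup>* u v"

definition connected_graph :: "'a set \<Rightarrow> 'a set set \<Rightarrow> bool" where
  "connected_graph V E \<longleftrightarrow> (\<forall>u\<in>V. \<forall>v\<in>V. reachable E u v)"

definition induced_cycle :: "'a set \<Rightarrow> 'a set set \<Rightarrow> 'a list \<Rightarrow> bool" where
  "induced_cycle V E cs \<longleftrightarrow> (let n = length cs in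
      distinct cs \<and> set cs \<subseteq> V \<and>
      (\<forall>i<n. {cs ! i, cs ! ((i + 1) mod n)} \<in> E) \<and>
      (\<forall>i<n. \<forall>j<n. i \<noteq> j \<and> j \<noteq> (i + 1) mod n \<and> i \<noteq> (j + 1) mod n
            \<longrightarrow> {cs ! i, cs ! j} \<notin> E))"

definition chordal :: "'a set \<Rightarrow> 'a set set \<Rightarrow> bool" where
  "chordal V E \<longleftrightarrow> \<not> (\<exists>cs. length cs \<ge> 4 \<and> induced_cycle V E cs)"

definition bridges :: "'a set set \<Rightarrow> 'a set set" where
  "bridges E = {e \<in> E. \<exists>u v. e = {u, v} \<and> \<not> reachable (E - {e}) u v}"

text \<open>Vertex sets of the trees of G: the non-trivial connected components of (V, bridges).\<close>
definition tree_vertex_sets :: "'a set \<Rightarrow> 'a set set \<Rightarrow> 'a set set" where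
  "tree_vertex_sets V E =
     {C. \<exists>v\<in>V. C = {u. reachable (bridges E) v u} \<and> card C \<ge> 2}"

definition has_31_cover :: "'a set set \<Rightarrow> bool" where
  "has_31_cover E \<longleftrightarrow> (\<forall>u v. {u, v} \<in> E \<longrightarrow> (\<exists>w. {u, w} \<in> E \<and> {v, w} \<in> E))"

definition non_edges :: "'a set \<Rightarrow> 'a set set \<Rightarrow> 'a set set" where
  "non_edges V E = {{u, v} | u v. u \<in> V \<and> v \<in> V \<and> u \<noteq> v \<and> {u, v} \<notin> E}"

definition completion_31 :: "'a set \<Rightarrow> 'a set set \<Rightarrow> 'a set set \<Rightarrow> bool" where
  "completion_31 V E E' \<longleftrightarrow> E' \<subseteq> non_edges V E \<and> has_31_cover (E \<union> E')"

definition min_completion_31 :: "'a set \<Rightarrow> 'a set set \<Rightarrow> 'a set set \<Rightarrow> bool" where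
  "min_completion_31 V E E' \<longleftrightarrow> completion_31 V E E' \<and>
     (\<forall>F. completion_31 V E F \<longrightarrow> card E' \<le> card F)"

definition between :: "'a set set \<Rightarrow> 'a set \<Rightarrow> 'a set \<Rightarrow> 'a set set" where
  "between E' Ti Tj = {e \<in> E'. \<exists>u v. e = {u, v} \<and> u \<in> Ti \<and> v \<in> Tj}"

end

theory Submission
  imports Defs
begin

lemma reach_refl[simp]: "reachable X a a"
  by (simp add: reachable_def)

lemma reach_edge: "{a,b} \<in> X \<Longrightarrow> reachable X a b"
  by (simp add: reachable_def r_into_rtranclp)

lemma reach_trans: "reachable X a b \<Longrightarrow> reachable X b c \<Longrightarrow> reachable X a c"
  unfolding reachable_def by (rule rtranclp_trans)

lemma reach_sym: "reachable X a b \<Longrightarrow> reachable X b a"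
  unfolding reachable_def
proof (induction rule: rtranclp_induct)
  case base then show ?case by simp
next
  case (step y z)
  then have "(\<lambda>x y. {x, y} \<in> X) z y" by (simp add: insert_commute)
  then show ?case using step(3) by (rule converse_rtranclp_into_rtranclp)
qed

lemma reach_mono: "reachable X a b \<Longrightarrow> X \<subseteq> Y \<Longrightarrow> reachable Y a b"
  unfolding reachable_def
  by (induction rule: rtranclp_induct) (auto intro: rtranclp.rtrancl_into_rtrancl)

lemma reach_induct[consumes 1, case_names base step]:
  assumes "reachable X a b" "P a"
    "\<And>y z. reachable X a y \<Longrightarrow> {y,z} \<in> X \<Longrightarrow> P y \<Longrightarrow> P z"
  shows "P b"
  using assms(1) unfolding reachable_def
  by (induction rule: rtranclp_induct) (auto intro: assms(2,3) simp: reachable_def)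

lemma reach_avoid:
  assumes "reachable X a c" "\<And>z. reachable X a z \<Longrightarrow> z \<notin> b"
  shows "reachable (X - {b}) a c"
  using assms(1)
proof (induction rule: reach_induct)
  case base then show ?case by simp
next
  case (step y z)
  have "y \<notin> b" using assms(2) step(1) .
  then have "{y,z} \<in> X - {b}" using step(2) by auto
  then show ?case using step(3) reach_trans reach_edge by metis
qed

lemma reach_insert:
  assumes "reachable (insert {p,q} X) z y"
  shows "reachable X z y \<or> (reachable X z p \<and> reachable X q y) \<or> (reachable X z q \<and> reachable X p y)"
  using assms
proof (induction rule: reach_induct)
  case base then show ?case by simp
next
  case (step y y')
  show ?case
  proof (cases "{y,y'} = {p,q}")
    case True
    then have "(y = p \<and> y' = q) \<or> (y = q \<and> y' = p)" by (auto simp: doubleton_eq_iff)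
    then show ?thesis using step(3) by (meson reach_refl reach_trans)
  next
    case False
    then have "{y,y'} \<in> X" using step(2) by auto
    then show ?thesis using step(3) by (meson reach_edge reach_trans)
  qed
qed

definition cls :: "'a set set \<Rightarrow> 'a set \<Rightarrow> 'a \<Rightarrow> 'a set" where
  "cls X U z = {y\<in>U. reachable X z y}"

definition ncomp :: "'a set set \<Rightarrow> 'a set \<Rightarrow> nat" where
  "ncomp X U = card (cls X U ` U)"

lemma cls_mem: "z \<in> U \<Longrightarrow> z \<in> cls X U z"
  by (simp add: cls_def)

lemma cls_eq: "reachable X z z' \<Longrightarrow> cls X U z = cls X U z'"
  unfolding cls_def by (auto intro: reach_trans reach_sym)

lemma cls_eq_iff: "z' \<in> U \<Longrightarrow> (cls X U z = cls X U z') \<longleftrightarrow> reachable X z z'"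
  unfolding cls_def by (auto intro: reach_trans reach_sym)

lemma reach_empty: "reachable {} z y \<Longrightarrow> z = y"
  by (induction rule: reach_induct) auto

lemma ncomp_empty: "ncomp {} U = card U"
proof -
  have "cls {} U ` U = (\<lambda>z. {z}) ` U"
    by (rule image_cong) (auto simp: cls_def dest: reach_empty)
  moreover have "inj_on (\<lambda>z. {z}) U" by (auto simp: inj_on_def)
  ultimately show ?thesis unfolding ncomp_def by (simp add: card_image)
qed

lemma cls_insert:
  assumes "p \<in> U" "q \<in> U"
  shows "cls (insert {p,q} X) U z =
     (if reachable X z p \<or> reachable X z q then cls X U p \<union> cls X U q else cls X U z)"
proof -
  have sub: "X \<subseteq> insert {p,q} X" by auto
  have pq: "reachable (insert {p,q} X) p q" by (rule reach_edge) simp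
  let ?R = "reachable (insert {p,q} X)"
  have m: "\<And>a b. reachable X a b \<Longrightarrow> ?R a b" using reach_mono[OF _ sub] by blast
  show ?thesis
  proof (cases "reachable X z p \<or> reachable X z q")
    case True
    have "?R z y \<longleftrightarrow> reachable X p y \<or> reachable X q y" for y
    proof
      assume "?R z y"
      then show "reachable X p y \<or> reachable X q y"
        using reach_insert[of p q X z y] True by (meson reach_sym reach_trans)
    next
      assume "reachable X p y \<or> reachable X q y"
      moreover have "?R z p" "?R z q" using True m pq reach_trans reach_sym by metis+
      ultimately show "?R z y" using m reach_trans by metis
    qed
    then show ?thesis using True unfolding cls_def by auto
  next
    case False
    have "?R z y \<longleftrightarrow> reachable X z y" for y
    proof
      assume "?R z y"
      from reach_insert[OF this] False show "reachable X z y" by simp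
    qed (rule m)
    then show ?thesis using False unfolding cls_def by simp
  qed
qed

lemma image_merge:
  assumes "p \<in> U" "q \<in> U"
  shows "cls (insert {p,q} X) U ` U =
    (\<lambda>C. if C = cls X U p \<or> C = cls X U q then cls X U p \<union> cls X U q else C) ` (cls X U ` U)"
proof -
  have "\<And>z. z \<in> U \<Longrightarrow> (reachable X z p \<or> reachable X z q) \<longleftrightarrow> (cls X U z = cls X U p \<or> cls X U z = cls X U q)"
    using assms cls_eq_iff by metis
  note H = this
  then show ?thesis
  proof -
    have "cls (insert {p,q} X) U ` U = (\<lambda>z. (\<lambda>C. if C = cls X U p \<or> C = cls X U q then cls X U p \<union> cls X U q else C) (cls X U z)) ` U"
      by (rule image_cong[OF refl]) (simp add: cls_insert[OF assms] H del: cls_def)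
    then show ?thesis by (simp only: image_image)
  qed
qed

lemma card_merge_ge:
  fixes S :: "'b set set"
  assumes "finite S" "\<And>C. C \<in> S \<Longrightarrow> C = A \<union> B' \<Longrightarrow> C = A \<or> C = B'"
  shows "card S \<le> card ((\<lambda>C. if C = A \<or> C = B' then A \<union> B' else C) ` S) + 1"
proof -
  let ?g = "\<lambda>C. if C = A \<or> C = B' then A \<union> B' else C"
  have inj: "inj_on ?g (S - {A})"
  proof (rule inj_onI)
    fix x y assume xy: "x \<in> S - {A}" "y \<in> S - {A}" "?g x = ?g y"
    show "x = y"
    proof (cases "x = B'")
      case True
      show ?thesis
      proof (rule ccontr)
        assume "x \<noteq> y"
        then have "y \<noteq> A" "y \<noteq> B'" using xy True by auto
        then have "y = A \<union> B'" using xy True by simp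
        then show False using assms(2)[of y] xy \<open>y \<noteq> A\<close> \<open>y \<noteq> B'\<close> by blast
      qed
    next
      case False
      then have gx: "?g x = x" using xy by simp
      show ?thesis
      proof (cases "y = B'")
        case True
        then have "x = A \<union> B'" using xy gx by simp
        then show ?thesis using assms(2)[of x] xy False by blast
      next
        case False
        then show ?thesis using xy gx by simp
      qed
    qed
  qed
  have "card (S - {A}) = card (?g ` (S - {A}))" using card_image[OF inj] by simp
  also have "\<dots> \<le> card (?g ` S)" by (rule card_mono) (use assms(1) in auto)
  finally have "card (S - {A}) \<le> card (?g ` S)" .
  moreover have "card S \<le> card (S - {A}) + 1"
  proof (cases "A \<in> S")
    case True
    then show ?thesis using card_Suc_Diff1[OF assms(1) True] by simp
  qed simp
  ultimately show ?thesis by linarith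
qed

lemma card_merge_le:
  fixes S :: "'b set set"
  assumes "finite S" "A \<in> S" "B' \<in> S" "A \<noteq> B'"
  shows "card ((\<lambda>C. if C = A \<or> C = B' then A \<union> B' else C) ` S) + 1 \<le> card S"
proof -
  let ?g = "\<lambda>C. if C = A \<or> C = B' then A \<union> B' else C"
  have "?g ` S = ?g ` (S - {A})"
  proof
    show "?g ` S \<subseteq> ?g ` (S - {A})"
    proof
      fix x assume "x \<in> ?g ` S"
      then obtain C where C: "C \<in> S" "x = ?g C" by blast
      show "x \<in> ?g ` (S - {A})"
      proof (cases "C = A")
        case True
        then have "x = ?g B'" using C by simp
        then show ?thesis using assms(3,4) by blast
      next
        case False
        then show ?thesis using C by blast
      qed
    qed
  qed blast
  then have "card (?g ` S) \<le> card (S - {A})"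
    using card_image_le[of "S - {A}" ?g] assms(1) by simp
  moreover have "card (S - {A}) + 1 = card S" using assms(1,2)
    by (metis Suc_eq_plus1 card_Suc_Diff1)
  ultimately show ?thesis by linarith
qed

lemma ncomp_insert_ge:
  assumes "finite U" "p \<in> U" "q \<in> U"
  shows "ncomp X U \<le> ncomp (insert {p,q} X) U + 1"
  unfolding ncomp_def image_merge[OF assms(2,3)]
proof (rule card_merge_ge)
  show "finite (cls X U ` U)" using assms(1) by simp
next
  fix C assume C: "C \<in> cls X U ` U" "C = cls X U p \<union> cls X U q"
  then obtain z where z: "z \<in> U" "C = cls X U z" by blast
  have "p \<in> C" using C(2) cls_mem[OF assms(2)] by blast
  then have "reachable X z p" using z by (simp add: cls_def)
  then show "C = cls X U p \<or> C = cls X U q" using z cls_eq by metis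
qed

lemma ncomp_insert_le:
  assumes "finite U" "p \<in> U" "q \<in> U" "\<not> reachable X p q"
  shows "ncomp (insert {p,q} X) U + 1 \<le> ncomp X U"
  unfolding ncomp_def image_merge[OF assms(2,3)]
proof (rule card_merge_le)
  show "finite (cls X U ` U)" using assms(1) by simp
  show "cls X U p \<in> cls X U ` U" "cls X U q \<in> cls X U ` U" using assms by auto
  show "cls X U p \<noteq> cls X U q" using cls_eq_iff[OF assms(3)] assms(4) by blast
qed

lemma ncomp_lower:
  assumes "finite U" "finite X" "\<forall>e\<in>X. \<exists>p q. e = {p,q} \<and> p \<in> U \<and> q \<in> U"
  shows "card U \<le> ncomp X U + card X"
  using assms(2,3)
proof (induction X rule: finite_induct)
  case empty
  then show ?case by (simp add: ncomp_empty)
next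
  case (insert e Y)
  obtain p q where e: "e = {p,q}" "p \<in> U" "q \<in> U" using bspec[OF insert.prems, of e] by blast
  have "ncomp Y U \<le> ncomp (insert e Y) U + 1"
    using ncomp_insert_ge[OF assms(1) e(2,3)] e(1) by simp
  moreover have "card (insert e Y) = card Y + 1" using insert.hyps by simp
  moreover have "card U \<le> ncomp Y U + card Y" using insert.IH insert.prems by simp
  ultimately show ?case by linarith
qed

lemma ncomp_acyclic:
  assumes "finite U" "finite X" "\<forall>e\<in>X. \<exists>p q. e = {p,q} \<and> p \<in> U \<and> q \<in> U \<and> \<not> reachable (X - {e}) p q"
  shows "ncomp X U + card X \<le> card U"
proof -
  have "finite Y \<Longrightarrow> Y \<subseteq> X \<Longrightarrow> ncomp Y U + card Y \<le> card U" for Y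
  proof (induction Y rule: finite_induct)
    case empty
    then show ?case by (simp add: ncomp_empty)
  next
    case (insert e Y)
    have eX: "e \<in> X" using insert.prems by simp
    obtain p q where e: "e = {p,q}" "p \<in> U" "q \<in> U" "\<not> reachable (X - {e}) p q"
      using bspec[OF assms(3) eX] by blast
    have "Y \<subseteq> X - {e}" using insert.prems insert.hyps(2) by blast
    then have "\<not> reachable Y p q" using e(4) reach_mono[of Y p q "X - {e}"] by blast
    then have "ncomp (insert e Y) U + 1 \<le> ncomp Y U"
      using ncomp_insert_le[OF assms(1) e(2,3)] e(1) by simp
    moreover have "card (insert e Y) = card Y + 1" using insert.hyps by simp
    moreover have "ncomp Y U + card Y \<le> card U" using insert.IH insert.prems by simp
    ultimately show ?case by linarith
  qed
  from this[OF assms(2) order_refl] show ?thesis .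
qed

lemma ncomp_refine:
  assumes "finite U" "\<And>a b. reachable D a b \<Longrightarrow> reachable K a b"
    "u \<in> U" "v \<in> U" "reachable K u v" "\<not> reachable D u v"
  shows "ncomp K U < ncomp D U"
proof -
  let ?h = "\<lambda>C. \<Union> (cls K U ` C)"
  have h: "?h (cls D U z) = cls K U z" if "z \<in> U" for z
  proof
    show "?h (cls D U z) \<subseteq> cls K U z"
    proof
      fix y assume "y \<in> ?h (cls D U z)"
      then obtain z' where "z' \<in> cls D U z" "y \<in> cls K U z'" by blast
      then have "reachable D z z'" by (simp add: cls_def)
      then have "reachable K z z'" by (rule assms(2))
      then have "cls K U z' = cls K U z" using cls_eq by metis
      then show "y \<in> cls K U z" using \<open>y \<in> cls K U z'\<close> by simp
    qed
  next
    have "z \<in> cls D U z" using cls_mem[OF that] .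
    then show "cls K U z \<subseteq> ?h (cls D U z)" by blast
  qed
  have img: "cls K U ` U = ?h ` (cls D U ` U)"
  proof -
    have "cls K U ` U = (\<lambda>z. ?h (cls D U z)) ` U"
      by (rule image_cong[OF refl]) (simp only: h)
    then show ?thesis by (simp only: image_image)
  qed
  have ni: "\<not> inj_on ?h (cls D U ` U)"
  proof
    assume "inj_on ?h (cls D U ` U)"
    moreover have "?h (cls D U u) = ?h (cls D U v)"
      using h[OF assms(3)] h[OF assms(4)] cls_eq[OF assms(5)] by simp
    ultimately have "cls D U u = cls D U v"
      using inj_onD[of ?h "cls D U ` U" "cls D U u" "cls D U v"] assms(3,4) by blast
    then show False using cls_eq_iff[OF assms(4)] assms(6) by blast
  qed
  have fin: "finite (cls D U ` U)" using assms(1) by simp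
  have "card (?h ` (cls D U ` U)) \<noteq> card (cls D U ` U)"
    using eq_card_imp_inj_on[OF fin] ni by blast
  moreover have "card (?h ` (cls D U ` U)) \<le> card (cls D U ` U)" by (rule card_image_le[OF fin])
  ultimately show ?thesis unfolding ncomp_def img by linarith
qed

lemma subpath:
  assumes "\<forall>k<n. R (f k) (f (Suc k))" "i \<le> j" "j \<le> n"
  shows "(R ^^ (j - i)) (f i) (f j)"
proof -
  have "\<exists>g. g 0 = f i \<and> g (j - i) = f j \<and> (\<forall>k<j - i. R (g k) (g (Suc k)))"
    by (rule exI[of _ "\<lambda>k. f (i + k)"]) (use assms in auto)
  then show ?thesis by (simp add: relpowp_fun_conv)
qed

lemma relpowp_comp: "(R ^^ m) a b \<Longrightarrow> (R ^^ n) b c \<Longrightarrow> (R ^^ (m + n)) a c"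
  by (auto simp: relpowp_add)

lemma graph_edge: "graph V E \<Longrightarrow> e \<in> E \<Longrightarrow> \<exists>u v. u \<noteq> v \<and> u \<in> V \<and> v \<in> V \<and> e = {u, v}"
  by (auto simp: graph_def)

lemma graph_edge_in: "graph V E \<Longrightarrow> {a,b} \<in> E \<Longrightarrow> a \<in> V \<and> b \<in> V \<and> a \<noteq> b"
  unfolding graph_def by (metis doubleton_eq_iff)

lemma chordal_tri:
  assumes G: "graph V E" and ch: "chordal V E" and e: "{x,y} \<in> E"
    and r: "reachable (E - {{x,y}}) x y"
  shows "\<exists>w. {x,w} \<in> E \<and> {y,w} \<in> E"
proof -
  let ?e = "{x,y}"
  let ?R = "\<lambda>a b. {a,b} \<in> E - {?e}"
  have "\<exists>n. (?R ^^ n) x y" using r by (simp add: reachable_def rtranclp_power)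
  define n where "n = (LEAST n. (?R ^^ n) x y)"
  have pn: "(?R ^^ n) x y" unfolding n_def by (rule LeastI_ex) fact
  have short: "\<not> (?R ^^ k) x y" if "k < n" for k
    using not_less_Least[of k "\<lambda>n. (?R ^^ n) x y"] that unfolding n_def by blast
  obtain f where f: "f 0 = x" "f n = y" "\<forall>i<n. ?R (f i) (f (Suc i))"
    using pn by (auto simp: relpowp_fun_conv)
  have xy: "x \<noteq> y" "x \<in> V" "y \<in> V" using graph_edge_in[OF G e] by auto
  have n0: "n \<noteq> 0" using pn xy by (cases n) auto
  have n1: "n \<noteq> 1" using pn by auto
  have dist: "f i \<noteq> f j" if "i < j" "j \<le> n" for i j
  proof
    assume eq: "f i = f j"
    have "(?R ^^ (i - 0)) (f 0) (f i)" by (rule subpath[of n ?R f, OF f(3)]) (use that in auto)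
    moreover have "(?R ^^ (n - j)) (f j) (f n)" by (rule subpath[of n ?R f, OF f(3)]) (use that in auto)
    ultimately have "(?R ^^ (i + (n - j))) x y" using eq f by (auto intro: relpowp_comp)
    moreover have "i + (n - j) < n" using that by auto
    ultimately show False using short by blast
  qed
  have chord: "{f i, f j} \<notin> E - {?e}" if "i + 1 < j" "j \<le> n" for i j
  proof
    assume "{f i, f j} \<in> E - {?e}"
    then have st: "(?R ^^ 1) (f i) (f j)" by (simp add: relcompp_apply)
    have "(?R ^^ (i - 0)) (f 0) (f i)" by (rule subpath[of n ?R f, OF f(3)]) (use that in auto)
    moreover have "(?R ^^ (n - j)) (f j) (f n)" by (rule subpath[of n ?R f, OF f(3)]) (use that in auto)
    ultimately have "(?R ^^ (i + 1 + (n - j))) x y"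
    proof -
      assume a1: "(?R ^^ (i - 0)) (f 0) (f i)" and a2: "(?R ^^ (n - j)) (f j) (f n)"
      have "(?R ^^ (i + 1)) (f 0) (f j)" using relpowp_comp[OF _ st] a1 by simp
      from relpowp_comp[OF this a2] show ?thesis using f(1,2) by simp
    qed
    moreover have "i + 1 + (n - j) < n" using that by auto
    ultimately show False using short by blast
  qed
  have fV: "f i \<in> V" if "i \<le> n" for i
  proof (cases "i < n")
    case True
    then show ?thesis using f(3) graph_edge_in[OF G] by blast
  next
    case False
    then show ?thesis using that f(2) xy by auto
  qed
  show ?thesis
  proof (cases "n = 2")
    case True
    have "?R (f 0) (f 1)" using f(3) True by auto
    moreover have "?R (f 1) (f 2)" using f(3) True by (metis Suc_1 lessI one_add_one)
    ultimately have "{x, f 1} \<in> E" "{f 1, y} \<in> E" using f(1,2) True by auto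
    then show ?thesis by (auto simp: insert_commute)
  next
    case False
    then have n3: "n \<ge> 3" using n0 n1 by auto
    define cs where "cs = map f [0..<Suc n]"
    have len: "length cs = Suc n" by (simp add: cs_def)
    have nth: "i < Suc n \<Longrightarrow> cs ! i = f i" for i unfolding cs_def
      by (simp only: nth_map length_upt nth_upt) simp
    have "induced_cycle V E cs"
      unfolding induced_cycle_def Let_def len
    proof (intro conjI allI impI)
      show "distinct cs"
        unfolding distinct_conv_nth len
      proof (intro allI impI)
        fix i j assume "i < Suc n" "j < Suc n" "i \<noteq> j"
        then show "cs ! i \<noteq> cs ! j" using dist[of i j] dist[of j i] nth by (cases "i < j") auto
      qed
      show "set cs \<subseteq> V" using fV by (auto simp: cs_def)
    next
      fix i assume i: "i < Suc n"
      show "{cs ! i, cs ! ((i + 1) mod Suc n)} \<in> E"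
      proof (cases "i < n")
        case True
        then show ?thesis using f(3) nth i by auto
      next
        case False
        then have "i = n" using i by auto
        then show ?thesis using nth f e by (auto simp: insert_commute)
      qed
    next
      fix i j assume ij: "i < Suc n" "j < Suc n"
        "i \<noteq> j \<and> j \<noteq> (i + 1) mod Suc n \<and> i \<noteq> (j + 1) mod Suc n"
      have main: "{f a, f b} \<notin> E" if ab: "a < b" "b < Suc n" "b \<noteq> (a + 1) mod Suc n" "a \<noteq> (b + 1) mod Suc n" for a b
      proof
        assume inE: "{f a, f b} \<in> E"
        have b1: "a + 1 < b" using ab by (cases "a + 1 = b") auto
        have "\<not> (a = 0 \<and> b = n)" using ab by auto
        then have "{f a, f b} \<noteq> ?e"
          using dist[of 0 b] dist[of a n] dist[of 0 a] dist[of b n] f(1,2) ab b1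
          by (auto simp: doubleton_eq_iff)
        then show False using chord[of a b] inE b1 ab by auto
      qed
      show "{cs ! i, cs ! j} \<notin> E"
      proof (cases "i < j")
        case True
        then show ?thesis using main[of i j] ij nth by auto
      next
        case False
        then have "j < i" using ij by auto
        then show ?thesis using main[of j i] ij nth by (auto simp: insert_commute)
      qed
    qed
    moreover have "length cs \<ge> 4" using len n3 by simp
    ultimately show ?thesis using ch unfolding chordal_def by blast
  qed
qed

lemma bridge_sep: "{a,b} \<in> bridges E \<Longrightarrow> \<not> reachable (E - {{a,b}}) a b"
  unfolding bridges_def by (auto simp: doubleton_eq_iff dest: reach_sym)

lemma bridge_in: "e \<in> bridges E \<Longrightarrow> e \<in> E"
  unfolding bridges_def by auto

lemma nonbridge: "{a,b} \<in> E \<Longrightarrow> {a,b} \<notin> bridges E \<Longrightarrow> reachable (E - {{a,b}}) a b"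
  unfolding bridges_def by blast

lemma bridge_no_tri:
  assumes G: "graph V E" and b: "{p,q} \<in> bridges E" and "{p,w} \<in> E" "{q,w} \<in> E"
  shows False
proof -
  have pq: "p \<noteq> q" using graph_edge_in[OF G bridge_in[OF b]] by simp
  have "p \<noteq> w" "q \<noteq> w" using graph_edge_in[OF G assms(3)] graph_edge_in[OF G assms(4)] by auto
  then have "{p,w} \<in> E - {{p,q}}" "{w,q} \<in> E - {{p,q}}" using assms(3,4) pq
    by (auto simp: doubleton_eq_iff insert_commute)
  then have "reachable (E - {{p,q}}) p q" using reach_edge reach_trans by metis
  then show False using bridge_sep[OF b] by simp
qed

lemma tree_memb:
  assumes "T = {u. reachable (bridges E) v u}" "z \<in> T"
  shows "u \<in> T \<longleftrightarrow> reachable (bridges E) z u"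
  using assms by (auto intro: reach_trans reach_sym)

lemma tree_disj:
  assumes "T1 = {u. reachable (bridges E) v1 u}" "T2 = {u. reachable (bridges E) v2 u}" "T1 \<noteq> T2"
  shows "T1 \<inter> T2 = {}"
proof (rule ccontr)
  assume "T1 \<inter> T2 \<noteq> {}"
  then obtain z where "z \<in> T1" "z \<in> T2" by blast
  then have "\<forall>u. u \<in> T1 \<longleftrightarrow> u \<in> T2" using tree_memb[OF assms(1)] tree_memb[OF assms(2)] by blast
  then show False using assms(3) by blast
qed

lemma reach_sub_V:
  assumes G: "graph V E" "X \<subseteq> E" "reachable X a b" "a \<in> V"
  shows "b \<in> V"
  using assms(3)
proof (induction rule: reach_induct)
  case base then show ?case using assms(4) .
next
  case (step y z)
  then have "{y,z} \<in> E" using G(2) by blast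
  then show ?case using graph_edge_in[OF G(1), of y z] by simp
qed

lemma L_lemma:
  assumes "\<And>a b. R a b \<Longrightarrow> {a,b} \<in> E"
  shows "(R ^^ m) a c \<Longrightarrow> reachable (E - {b}) a c \<or> (\<exists>k<m. \<exists>s\<in>b. (R ^^ k) s c \<and> reachable (E - {b}) s c)"
proof (induction m arbitrary: a)
  case 0 then show ?case by simp
next
  case (Suc m)
  then obtain a1 where a1: "R a a1" "(R ^^ m) a1 c" using relpowp_Suc_D2 by metis
  from Suc.IH[OF a1(2)] show ?case
  proof
    assume r: "reachable (E - {b}) a1 c"
    show ?case
    proof (cases "{a,a1} = b")
      case True
      then show ?thesis using r a1(2) by blast
    next
      case False
      then have "{a,a1} \<in> E - {b}" using assms a1(1) by blast
      then show ?thesis using r reach_edge[of a a1 "E - {b}"] reach_trans by metis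
    qed
  next
    assume "\<exists>k<m. \<exists>s\<in>b. (R ^^ k) s c \<and> reachable (E - {b}) s c"
    then obtain k s where "k < m" "s \<in> b" "(R ^^ k) s c \<and> reachable (E - {b}) s c" by blast
    then show ?case using less_SucI by blast
  qed
qed

lemma S_lemma:
  assumes "x0 \<noteq> x2" "reachable (bridges E) x0 x2"
    and H: "\<And>z. {x0,z} \<in> bridges E \<Longrightarrow> reachable (bridges E) x0 z \<Longrightarrow> reachable (E - {{x0,z}}) x0 x2"
  shows False
proof -
  let ?R = "\<lambda>a b. {a,b} \<in> bridges E"
  have "\<exists>n. (?R ^^ n) x0 x2" using assms(2) by (simp add: reachable_def rtranclp_power)
  define n where "n = (LEAST n. (?R ^^ n) x0 x2)"
  have pn: "(?R ^^ n) x0 x2" unfolding n_def by (rule LeastI_ex) fact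
  have short: "\<not> (?R ^^ k) x0 x2" if "k < n" for k
    using not_less_Least[of k "\<lambda>n. (?R ^^ n) x0 x2"] that unfolding n_def by blast
  have "n \<noteq> 0" using pn assms(1) by (cases n) auto
  then obtain m where m: "n = Suc m" by (cases n) auto
  have "(?R ^^ Suc m) x0 x2" using pn m by simp
  then obtain z1 where z1: "?R x0 z1" "(?R ^^ m) z1 x2" using relpowp_Suc_D2[of m ?R x0 x2] by blast
  let ?b = "{x0,z1}"
  have sep: "\<not> reachable (E - {?b}) x0 z1" using bridge_sep[OF z1(1)] .
  have r: "reachable (E - {?b}) x0 x2" using H[OF z1(1) reach_edge[OF z1(1)]] .
  have L: "reachable (E - {?b}) z1 x2 \<or> (\<exists>k<m. \<exists>s\<in>?b. (?R ^^ k) s x2 \<and> reachable (E - {?b}) s x2)"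
    by (rule L_lemma[OF _ z1(2)]) (rule bridge_in)
  have nz: "\<not> reachable (E - {?b}) z1 x2"
  proof
    assume "reachable (E - {?b}) z1 x2"
    then have "reachable (E - {?b}) x2 z1" by (rule reach_sym)
    with r have "reachable (E - {?b}) x0 z1" by (rule reach_trans)
    with sep show False by simp
  qed
  from L nz obtain k where k: "k < m" "(?R ^^ k) x0 x2 \<or> (?R ^^ k) z1 x2 \<and> reachable (E - {?b}) z1 x2"
    by blast
  then have "(?R ^^ k) x0 x2" using nz by blast
  then show False using short[of k] k(1) m by simp
qed

lemma cross_unique:
  assumes G: "graph V E"
    and T1: "T1 = {u. reachable (bridges E) v1 u}" and T2: "T2 = {u. reachable (bridges E) v2 u}"
    and disj: "T1 \<inter> T2 = {}"
    and x: "x0 \<in> T1" "x2 \<in> T1" and y: "y0 \<in> T2" "y2 \<in> T2"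
    and e: "{x0,y0} \<in> E" "{x2,y2} \<in> E" and ne: "x0 \<noteq> x2"
  shows False
proof (rule S_lemma[OF ne])
  show "reachable (bridges E) x0 x2" using tree_memb[OF T1 x(1)] x(2) by blast
next
  fix z assume zb: "{x0,z} \<in> bridges E" and zr: "reachable (bridges E) x0 z"
  let ?b = "{x0,z}"
  have zT: "z \<in> T1" using tree_memb[OF T1 x(1)] zr by blast
  have bT2: "\<And>w. w \<in> T2 \<Longrightarrow> w \<notin> ?b" using disj x(1) zT by blast
  have "reachable (bridges E) y0 y2" using tree_memb[OF T2 y(1)] y(2) by blast
  then have "reachable (bridges E - {?b}) y0 y2"
  proof (rule reach_avoid)
    fix w assume "reachable (bridges E) y0 w"
    then have "w \<in> T2" using tree_memb[OF T2 y(1)] by blast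
    then show "w \<notin> ?b" using bT2 by blast
  qed
  then have r1: "reachable (E - {?b}) y0 y2"
    by (rule reach_mono) (auto dest: bridge_in)
  have "{x0,y0} \<in> E - {?b}" using e(1) bT2[OF y(1)] by auto
  moreover have "{y2,x2} \<in> E - {?b}" using e(2) bT2[OF y(2)] by (auto simp: insert_commute)
  ultimately show "reachable (E - {?b}) x0 x2"
    using r1 reach_edge[of x0 y0 "E - {?b}"] reach_edge[of y2 x2 "E - {?b}"] reach_trans by metis
qed

lemma tree_finite_sub:
  assumes G: "graph V E" and T: "T = {u. reachable (bridges E) v u}" and v: "v \<in> V"
  shows "T \<subseteq> V"
proof
  fix u assume "u \<in> T"
  then have "reachable (bridges E) v u" using T by simp
  then show "u \<in> V" using reach_sub_V[OF G _ _ v] bridge_in by blast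
qed

lemma fix_exists:
  assumes G: "graph V E" and T: "T = {u. reachable (bridges E) v u}" and v: "v \<in> V"
    and c3: "card T \<ge> 3" and b: "{p,q} \<in> bridges E" and p: "p \<in> T"
  shows "\<exists>p' q' r. {p,q} = {p',q'} \<and> {p',r} \<in> E \<and> {q',r} \<in> non_edges V E \<and> {q',r} \<subseteq> T"
proof -
  have TV: "T \<subseteq> V" by (rule tree_finite_sub[OF G T v])
  have q: "q \<in> T" using tree_memb[OF T p] reach_edge[OF b] by blast
  have "\<not> T \<subseteq> {p,q}"
  proof
    assume "T \<subseteq> {p,q}"
    then have "card T \<le> card {p,q}" by (rule card_mono[rotated]) simp
    also have "\<dots> \<le> 2" by (simp add: card_insert_if)
    finally show False using c3 by simp
  qed
  then obtain z where z: "z \<in> T" "z \<notin> {p,q}" by blast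
  have rz: "reachable (bridges E) p z" using tree_memb[OF T p] z(1) by blast
  have "z \<in> {p,q} \<or> (\<exists>r. r \<notin> {p,q} \<and> ({p,r} \<in> bridges E \<or> {q,r} \<in> bridges E))"
    using rz
  proof (induction rule: reach_induct)
    case base then show ?case by simp
  next
    case (step y z')
    show ?case
    proof (cases "y \<in> {p,q}")
      case True
      show ?thesis
      proof (cases "z' \<in> {p,q}")
        case False
        then show ?thesis using True step(2) by auto
      qed simp
    next
      case False
      then show ?thesis using step(3) by blast
    qed
  qed
  then obtain r where r: "r \<notin> {p,q}" "{p,r} \<in> bridges E \<or> {q,r} \<in> bridges E" using z(2) by blast
  have pq: "p \<noteq> q" using graph_edge_in[OF G bridge_in[OF b]] by simp
  show ?thesis
  proof (cases "{p,r} \<in> bridges E")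
    case True
    have rT: "r \<in> T" using tree_memb[OF T p] reach_edge[OF True] by blast
    have "{q,r} \<notin> E" using bridge_no_tri[OF G b, of r] bridge_in[OF True] by blast
    moreover have "q \<in> V" "r \<in> V" using TV q rT by auto
    moreover have "q \<noteq> r" using r(1) by auto
    ultimately have "{q,r} \<in> non_edges V E" unfolding non_edges_def by blast
    moreover have "{q,r} \<subseteq> T" using q rT by simp
    ultimately show ?thesis using bridge_in[OF True] by blast
  next
    case False
    then have br: "{q,r} \<in> bridges E" using r(2) by simp
    have b': "{q,p} \<in> bridges E" using b by (simp add: insert_commute)
    have rT: "r \<in> T" using tree_memb[OF T q] reach_edge[OF br] by blast
    have "{p,r} \<notin> E" using bridge_no_tri[OF G b', of r] bridge_in[OF br] by blast
    moreover have "p \<in> V" "r \<in> V" using TV p rT by auto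
    moreover have "p \<noteq> r" using r(1) by auto
    ultimately have "{p,r} \<in> non_edges V E" unfolding non_edges_def by blast
    moreover have "{p,r} \<subseteq> T" using p rT by simp
    moreover have "{p,q} = {q,p}" by (simp add: insert_commute)
    ultimately show ?thesis using bridge_in[OF br] by blast
  qed
qed

theorem lemma12:
  fixes V :: "'a set" and E E' :: "'a set set" and Ti Tj :: "'a set"
  assumes "graph V E" "connected_graph V E" "chordal V E" "card V \<ge> 3"
    and "min_completion_31 V E E'"
    and "Ti \<in> tree_vertex_sets V E" "Tj \<in> tree_vertex_sets V E" "Ti \<noteq> Tj"
    and "card Ti \<ge> 3" "card Tj \<ge> 3"
    and "card (between E' Ti Tj) > 0"
  shows "\<exists>F E''. F \<subseteq> non_edges V E \<and>
           (\<forall>e\<in>F. e \<subseteq> Ti \<or> e \<subseteq> Tj) \<and>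
           E'' = (E' - between E' Ti Tj) \<union> F \<and>
           min_completion_31 V E E'' \<and>
           card (between E'' Ti Tj) = 0"
proof -
  note G = assms(1) and ch = assms(3)
  obtain vi where vi: "vi \<in> V" "Ti = {u. reachable (bridges E) vi u}"
    using assms(6) unfolding tree_vertex_sets_def by blast
  obtain vj where vj: "vj \<in> V" "Tj = {u. reachable (bridges E) vj u}"
    using assms(7) unfolding tree_vertex_sets_def by blast
  have disj: "Ti \<inter> Tj = {}" by (rule tree_disj[OF vi(2) vj(2) assms(8)])
  have TiV: "Ti \<subseteq> V" by (rule tree_finite_sub[OF G vi(2) vi(1)])
  have TjV: "Tj \<subseteq> V" by (rule tree_finite_sub[OF G vj(2) vj(1)])
  have finV: "finite V" using G by (simp add: graph_def)
  have EV: "E \<subseteq> Pow V"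
  proof
    fix e assume "e \<in> E"
    then obtain u v where "u \<in> V" "v \<in> V" "e = {u,v}" using graph_edge[OF G] by blast
    then show "e \<in> Pow V" by simp
  qed
  have finE: "finite E" using finite_subset[OF EV] finV by simp
  have NV: "non_edges V E \<subseteq> Pow V" unfolding non_edges_def by auto
  have finN: "finite (non_edges V E)" using finite_subset[OF NV] finV by simp
  have E'N: "E' \<subseteq> non_edges V E" and cov: "has_31_cover (E \<union> E')"
    and minE': "\<And>F. completion_31 V E F \<Longrightarrow> card E' \<le> card F"
    using assms(5) unfolding min_completion_31_def completion_31_def by auto
  have finE': "finite E'" using finite_subset[OF E'N finN] .
  define B where "B = between E' Ti Tj"
  define P where "P = E' - B"
  have BE': "B \<subseteq> E'" unfolding B_def between_def by blast
  have finB: "finite B" using finite_subset[OF BE' finE'] .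
  have finP: "finite P" unfolding P_def using finE' by simp
  have cardE': "card E' = card P + card B"
    unfolding P_def using card_Diff_subset[OF finB BE'] card_mono[OF finE' BE'] by simp
  define D where "D = {e \<in> E. \<not> (\<exists>u v w. e = {u,v} \<and> {u,w} \<in> E \<union> P \<and> {v,w} \<in> E \<union> P)}"
  define D' where "D' = {e \<in> P. \<not> (\<exists>u v w. e = {u,v} \<and> {u,w} \<in> E \<union> P \<and> {v,w} \<in> E \<union> P)}"
  define K where "K = {e \<in> E \<union> E'. \<exists>u v. e = {u,v} \<and> u \<in> Ti \<and> v \<in> Tj}"
  define Kc where "Kc = {e \<in> E. \<exists>u v. e = {u,v} \<and> u \<in> Ti \<and> v \<in> Tj}"
  have finD: "finite D" unfolding D_def using finE by simp
  have finD': "finite D'" unfolding D'_def using finP by simp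
  have finK: "finite K" unfolding K_def using finE finE' by simp
  have finKc: "finite Kc" unfolding Kc_def using finE by simp
  have Dprop: "d \<in> bridges E \<and> (\<exists>a b w. d = {a,b} \<and> ((a \<in> Ti \<and> b \<in> Ti \<and> w \<in> Tj) \<or> (a \<in> Tj \<and> b \<in> Tj \<and> w \<in> Ti)) \<and> {a,w} \<in> K \<and> {b,w} \<in> K)"
    if dD: "d \<in> D" for d
  proof -
    have dE: "d \<in> E" and nt: "\<not> (\<exists>u v w. d = {u,v} \<and> {u,w} \<in> E \<union> P \<and> {v,w} \<in> E \<union> P)"
      using dD unfolding D_def by auto
    obtain a b where ab: "a \<noteq> b" "d = {a,b}" using graph_edge[OF G dE] by blast
    have "{a,b} \<in> E \<union> E'" using dE ab by simp
    then obtain w where w: "{a,w} \<in> E \<union> E'" "{b,w} \<in> E \<union> E'"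
      using cov unfolding has_31_cover_def by blast
    have dbr: "d \<in> bridges E"
    proof (rule ccontr)
      assume "d \<notin> bridges E"
      then have "reachable (E - {{a,b}}) a b" using nonbridge[of a b E] dE ab by simp
      then obtain w' where "{a,w'} \<in> E" "{b,w'} \<in> E" using chordal_tri[OF G ch] dE ab by blast
      then show False using nt ab by blast
    qed
    have notP: "x \<in> B" if "x \<in> E \<union> E'" "x \<notin> E \<union> P" for x
      using that unfolding P_def by blast
    have claim: "\<exists>a b w. d = {a,b} \<and> ((a \<in> Ti \<and> b \<in> Ti \<and> w \<in> Tj) \<or> (a \<in> Tj \<and> b \<in> Tj \<and> w \<in> Ti)) \<and> {a,w} \<in> K \<and> {b,w} \<in> K"
      if c: "d = {a',b'}" "{a',w'} \<in> B" "{b',w'} \<in> E \<union> E'" for a' b' w'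
    proof -
      obtain u v where uv: "{a',w'} = {u,v}" "u \<in> Ti" "v \<in> Tj"
        using c(2) unfolding B_def between_def by blast
      have aw: "(a' \<in> Ti \<and> w' \<in> Tj) \<or> (a' \<in> Tj \<and> w' \<in> Ti)"
        using uv by (auto simp: doubleton_eq_iff)
      have rab: "reachable (bridges E) a' b'" using dbr c(1) reach_edge by metis
      have same: "(a' \<in> Ti \<longrightarrow> b' \<in> Ti) \<and> (a' \<in> Tj \<longrightarrow> b' \<in> Tj)"
        using tree_memb[OF vi(2), of a'] tree_memb[OF vj(2), of a'] rab by blast
      have inK: "x \<in> K" if "x \<in> E \<union> E'" "x = {y,z}" "(y \<in> Ti \<and> z \<in> Tj) \<or> (y \<in> Tj \<and> z \<in> Ti)" for x y z
      proof -
        have "x = {z,y}" using that(2) by (simp add: insert_commute)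
        then show ?thesis using that unfolding K_def by blast
      qed
      have "{a',w'} \<in> E \<union> E'" using c(2) BE' by blast
      then have k1: "{a',w'} \<in> K" using inK aw by blast
      have k2: "{b',w'} \<in> K" using inK[OF c(3) refl] aw same by blast
      show ?thesis using c(1) aw same k1 k2 by blast
    qed
    have "\<not> ({a,w} \<in> E \<union> P \<and> {b,w} \<in> E \<union> P)" using nt ab by blast
    then have "{a,w} \<in> B \<or> {b,w} \<in> B" using notP w by blast
    then have "\<exists>a b w. d = {a,b} \<and> ((a \<in> Ti \<and> b \<in> Ti \<and> w \<in> Tj) \<or> (a \<in> Tj \<and> b \<in> Tj \<and> w \<in> Ti)) \<and> {a,w} \<in> K \<and> {b,w} \<in> K"
    proof
      assume "{a,w} \<in> B"
      then show ?thesis using claim[OF ab(2) _ w(2)] by blast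
    next
      assume "{b,w} \<in> B"
      moreover have "d = {b,a}" using ab(2) by (simp add: insert_commute)
      ultimately show ?thesis using claim[OF _ _ w(1)] by blast
    qed
    then show ?thesis using dbr by blast
  qed
  have Kc1: "card Kc \<le> 1"
  proof -
    have "e1 = e2" if ee: "e1 \<in> Kc" "e2 \<in> Kc" for e1 e2
    proof -
      obtain x0 y0 where e1: "e1 \<in> E" "e1 = {x0,y0}" "x0 \<in> Ti" "y0 \<in> Tj" using ee(1) unfolding Kc_def by blast
      obtain x2 y2 where e2: "e2 \<in> E" "e2 = {x2,y2}" "x2 \<in> Ti" "y2 \<in> Tj" using ee(2) unfolding Kc_def by blast
      have "x0 = x2"
      proof (rule ccontr)
        assume "x0 \<noteq> x2"
        then show False using cross_unique[OF G vi(2) vj(2) disj e1(3) e2(3) e1(4) e2(4)] e1 e2 by simp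
      qed
      moreover have "y0 = y2"
      proof (rule ccontr)
        assume ne: "y0 \<noteq> y2"
        have "Tj \<inter> Ti = {}" using disj by blast
        moreover have "{y0,x0} \<in> E" "{y2,x2} \<in> E" using e1 e2 by (auto simp: insert_commute)
        ultimately show False using cross_unique[OF G vj(2) vi(2) _ e1(4) e2(4) e1(3) e2(3)] ne by blast
      qed
      ultimately show ?thesis using e1 e2 by simp
    qed
    then show ?thesis using card_le_Suc0_iff_eq[OF finKc] by simp
  qed
  have KBKc: "K \<subseteq> B \<union> Kc" unfolding K_def Kc_def B_def between_def by blast
  have cardK: "card K \<le> card B + 1"
  proof -
    have "card K \<le> card (B \<union> Kc)" by (rule card_mono[OF _ KBKc]) (use finB finKc in simp)
    also have "\<dots> \<le> card B + card Kc" by (rule card_Un_le)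
    finally show ?thesis using Kc1 by simp
  qed
  define U where "U = Ti \<union> Tj"
  have finU: "finite U" unfolding U_def using finite_subset[OF TiV finV] finite_subset[OF TjV finV] by simp
  have DU: "\<forall>e\<in>D. \<exists>p q. e = {p,q} \<and> p \<in> U \<and> q \<in> U \<and> \<not> reachable (D - {e}) p q"
  proof
    fix e assume eD: "e \<in> D"
    obtain a b w where abw: "e = {a,b}" "(a \<in> Ti \<and> b \<in> Ti \<and> w \<in> Tj) \<or> (a \<in> Tj \<and> b \<in> Tj \<and> w \<in> Ti)"
      using Dprop[OF eD] by blast
    have eb: "e \<in> bridges E" using Dprop[OF eD] by blast
    have "\<not> reachable (E - {e}) a b" using bridge_sep[of a b E] eb abw(1) by simp
    moreover have "D - {e} \<subseteq> E - {e}" unfolding D_def by blast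
    ultimately have "\<not> reachable (D - {e}) a b" using reach_mono[of "D - {e}" a b "E - {e}"] by blast
    then show "\<exists>p q. e = {p,q} \<and> p \<in> U \<and> q \<in> U \<and> \<not> reachable (D - {e}) p q"
      using abw unfolding U_def by blast
  qed
  have KU: "\<forall>e\<in>K. \<exists>p q. e = {p,q} \<and> p \<in> U \<and> q \<in> U"
    unfolding K_def U_def by blast
  have c1: "ncomp D U + card D \<le> card U" by (rule ncomp_acyclic[OF finU finD DU])
  have c2: "card U \<le> ncomp K U + card K" by (rule ncomp_lower[OF finU finK KU])
  have "B \<noteq> {}" using assms(11) unfolding B_def by auto
  then obtain e0 where "e0 \<in> B" by blast
  then obtain u0 v0 where e0: "e0 = {u0,v0}" "u0 \<in> Ti" "v0 \<in> Tj" "e0 \<in> E'"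
    unfolding B_def between_def by blast
  have DK: "reachable K a b" if "reachable D a b" for a b
    using that
  proof (induction rule: reach_induct)
    case base then show ?case by simp
  next
    case (step y z)
    obtain a' b' w where abw: "{y,z} = {a',b'}" "{a',w} \<in> K" "{b',w} \<in> K"
      using Dprop[OF step(2)] by blast
    have "{w,b'} \<in> K" using abw(3) by (simp add: insert_commute)
    then have "reachable K a' b'" using reach_edge[OF abw(2)] reach_edge[of w b' K] reach_trans by metis
    then have "reachable K y z" using abw(1) reach_sym by (metis doubleton_eq_iff)
    then show ?case using step(3) reach_trans by metis
  qed
  have DTi: "z \<in> Ti" if "reachable D u0 z" for z
    using that
  proof (induction rule: reach_induct)
    case base then show ?case using e0(2) .
  next
    case (step y z)
    obtain a' b' w where abw: "{y,z} = {a',b'}" "(a' \<in> Ti \<and> b' \<in> Ti \<and> w \<in> Tj) \<or> (a' \<in> Tj \<and> b' \<in> Tj \<and> w \<in> Ti)"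
      using Dprop[OF step(2)] by blast
    have "y \<in> {a',b'}" "z \<in> {a',b'}" using abw(1) by (auto simp: doubleton_eq_iff)
    then show ?case using abw(2) step(3) disj by blast
  qed
  have c3: "ncomp K U < ncomp D U"
  proof (rule ncomp_refine[OF finU DK])
    show "u0 \<in> U" "v0 \<in> U" using e0 unfolding U_def by auto
    show "reachable K u0 v0" using e0 unfolding K_def by (auto intro!: reach_edge)
    show "\<not> reachable D u0 v0" using DTi e0(3) disj by blast
  qed
  have cardD: "card D \<le> card B" using c1 c2 c3 cardK by linarith
  define fprop where "fprop = (\<lambda>d f. \<exists>p' q' r. d = {p',q'} \<and> f = {q',r} \<and> {p',r} \<in> E \<and> f \<in> non_edges V E \<and> (f \<subseteq> Ti \<or> f \<subseteq> Tj))"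
  have fex: "\<exists>f. fprop d f" if dD: "d \<in> D" for d
  proof -
    obtain a b w where abw: "d = {a,b}" "(a \<in> Ti \<and> b \<in> Ti \<and> w \<in> Tj) \<or> (a \<in> Tj \<and> b \<in> Tj \<and> w \<in> Ti)"
      using Dprop[OF dD] by blast
    have db: "{a,b} \<in> bridges E" using Dprop[OF dD] abw(1) by simp
    from abw(2) show ?thesis
    proof
      assume "a \<in> Ti \<and> b \<in> Ti \<and> w \<in> Tj"
      then obtain p' q' r where "{a,b} = {p',q'}" "{p',r} \<in> E" "{q',r} \<in> non_edges V E" "{q',r} \<subseteq> Ti"
        using fix_exists[OF G vi(2) vi(1) assms(9) db] by blast
      then show ?thesis unfolding fprop_def using abw(1) by blast
    next
      assume "a \<in> Tj \<and> b \<in> Tj \<and> w \<in> Ti"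
      then obtain p' q' r where "{a,b} = {p',q'}" "{p',r} \<in> E" "{q',r} \<in> non_edges V E" "{q',r} \<subseteq> Tj"
        using fix_exists[OF G vj(2) vj(1) assms(10) db] by blast
      then show ?thesis unfolding fprop_def using abw(1) by blast
    qed
  qed
  define fx where "fx = (\<lambda>d. SOME f. fprop d f)"
  have fxp: "fprop d (fx d)" if "d \<in> D" for d
    unfolding fx_def using someI_ex[OF fex[OF that]] .
  define F where "F = fx ` D"
  have FN: "F \<subseteq> non_edges V E" unfolding F_def using fxp unfolding fprop_def by blast
  have FT: "\<forall>e\<in>F. e \<subseteq> Ti \<or> e \<subseteq> Tj" unfolding F_def using fxp unfolding fprop_def by blast
  have cardF: "card F \<le> card D" unfolding F_def by (rule card_image_le[OF finD])
  define Eo where "Eo = (P - D') \<union> F"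
  have PN: "P \<subseteq> non_edges V E" using E'N unfolding P_def by blast
  have covo: "has_31_cover (E \<union> Eo)"
    unfolding has_31_cover_def
  proof (intro allI impI)
    fix u v assume uv: "{u,v} \<in> E \<union> Eo"
    show "\<exists>w. {u,w} \<in> E \<union> Eo \<and> {v,w} \<in> E \<union> Eo"
    proof (cases "{u,v} \<in> F")
      case True
      then obtain d where dD: "d \<in> D" "{u,v} = fx d" unfolding F_def by blast
      obtain p' q' r where pr: "d = {p',q'}" "fx d = {q',r}" "{p',r} \<in> E"
        using fxp[OF dD(1)] unfolding fprop_def by blast
      have dE: "d \<in> E" using dD(1) unfolding D_def by simp
      have "{q',p'} \<in> E" "{r,p'} \<in> E" using dE pr by (auto simp: insert_commute)
      then show ?thesis using dD(2) pr(2) by (auto simp: doubleton_eq_iff)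
    next
      case notF: False
      show ?thesis
      proof (cases "{u,v} \<in> D")
        case True
        obtain p' q' r where pr: "{u,v} = {p',q'}" "fx {u,v} = {q',r}" "{p',r} \<in> E"
          using fxp[OF True] unfolding fprop_def by blast
        have "{q',r} \<in> F" unfolding F_def using True pr(2) by (metis imageI)
        then have "{q',r} \<in> E \<union> Eo" unfolding Eo_def by blast
        then show ?thesis using pr(1,3) by (auto simp: doubleton_eq_iff)
      next
        case notD: False
        have uvP0: "{u,v} \<in> E \<or> {u,v} \<in> P - D'" using uv notF unfolding Eo_def by blast
        have "\<exists>u' v' w. {u,v} = {u',v'} \<and> {u',w} \<in> E \<union> P \<and> {v',w} \<in> E \<union> P"
        proof (cases "{u,v} \<in> E")
          case True
          then show ?thesis using notD unfolding D_def by blast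
        next
          case False
          then have "{u,v} \<in> P - D'" using uvP0 by blast
          then show ?thesis unfolding D'_def by blast
        qed
        then obtain w where w: "{u,w} \<in> E \<union> P" "{v,w} \<in> E \<union> P"
          by (auto simp: doubleton_eq_iff) 
        have uvP: "{u,v} \<in> E \<union> P" using uvP0 by blast
        have "{u,w} \<notin> D'"
        proof
          assume "{u,w} \<in> D'"
          moreover have "{w,v} \<in> E \<union> P" using w(2) by (simp add: insert_commute)
          ultimately show False using uvP unfolding D'_def by blast
        qed
        moreover have "{v,w} \<notin> D'"
        proof
          assume "{v,w} \<in> D'"
          moreover have "{v,u} \<in> E \<union> P" "{w,u} \<in> E \<union> P" using uvP w(1) by (auto simp: insert_commute)
          ultimately show False unfolding D'_def by blast
        qed
        ultimately show ?thesis using w unfolding Eo_def by blast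
      qed
    qed
  qed
  have compo: "completion_31 V E Eo"
    unfolding completion_31_def Eo_def using covo PN FN unfolding Eo_def by blast
  have D'P: "D' \<subseteq> P" unfolding D'_def by blast
  have "card Eo \<le> card (P - D') + card F" unfolding Eo_def by (rule card_Un_le)
  also have "card (P - D') = card P - card D'" by (rule card_Diff_subset[OF finD' D'P])
  finally have cEo: "card Eo \<le> card P - card D' + card F" .
  have cD'P: "card D' \<le> card P" by (rule card_mono[OF finP D'P])
  have "card E' \<le> card Eo" by (rule minE'[OF compo])
  then have "card D' = 0" using cEo cardE' cardF cardD cD'P by linarith
  then have D'e: "D' = {}" using finD' by simp
  have EoE: "Eo = (E' - between E' Ti Tj) \<union> F" unfolding Eo_def D'e P_def B_def by simp
  have minEo: "min_completion_31 V E Eo"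
    unfolding min_completion_31_def
  proof (intro conjI allI impI)
    show "completion_31 V E Eo" by (rule compo)
    fix F' assume "completion_31 V E F'"
    then have "card E' \<le> card F'" by (rule minE')
    moreover have "card Eo \<le> card E'" using cEo cardE' cardF cardD by linarith
    ultimately show "card Eo \<le> card F'" by linarith
  qed
  have betw: "between Eo Ti Tj = {}"
  proof (rule ccontr)
    assume "between Eo Ti Tj \<noteq> {}"
    then obtain e u v where e: "e \<in> Eo" "e = {u,v}" "u \<in> Ti" "v \<in> Tj" unfolding between_def by blast
    show False
    proof (cases "e \<in> F")
      case True
      then have "e \<subseteq> Ti \<or> e \<subseteq> Tj" using FT by blast
      then show False using e disj by blast
    next
      case False
      then have "e \<in> P" using e(1) unfolding Eo_def by blast
      then have "e \<in> E'" "e \<notin> B" unfolding P_def by auto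
      then show False using e unfolding B_def between_def by blast
    qed
  qed
  have "card (between Eo Ti Tj) = 0" using betw by simp
  then have "F \<subseteq> non_edges V E \<and> (\<forall>e\<in>F. e \<subseteq> Ti \<or> e \<subseteq> Tj) \<and>
           Eo = (E' - between E' Ti Tj) \<union> F \<and> min_completion_31 V E Eo \<and> card (between Eo Ti Tj) = 0"
    using FN FT EoE minEo by blast
  then show ?thesis by blast
qed

end
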